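(* Let $\mathcal{X}=\mathbb{R}^d$ with Euclidean metric $|\cdot|_2$, let $\mu,\nu$ be Borel probability measures on $\mathbb{R}^d$ with $\nu$ having finite first moment and not a Dirac measure, and let $\pi\in\Pi(\mu,\nu)$. Define $$T^{\mathrm{DGS}}(\pi)=1-\frac{\int\int\int|y-z|_2\,\pi_{x_1}(dy)\,\pi_{x_1}(dz)\,\mu(dx_1)}{\int\int|y-z|_2\,\nu(dy)\,\nu(dz)}.$$ Then $T^{\mathrm{DGS}}(\pi)\le 2\,\overrightarrow{\mathcal{W}}(\pi)$.
   Context: $\Pi(\mu,\nu)$ is the set of couplings of $\mu,\nu$; $\pi_{x_1}$ is the disintegration of $\pi$ w.r.t. the first coordinate. $\mathcal{W}(\alpha,\beta)=\inf_{\gamma\in\Pi(\alpha,\beta)}\int|x-y|_2\,\gamma(dx,dy)$. The Wasserstein correlation coefficient is $\overrightarrow{\mathcal{W}}(\pi)=\int\mathcal{W}(\pi_{x_1},\nu)\,\mu(dx_1)\big/\int\int|y-z|_2\,\nu(dy)\nu(dz)$. *)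

theory Defs
  imports "HOL-Probability.Probability"
begin

definition couplings :: "'a::euclidean_space measure \<Rightarrow> 'b::euclidean_space measure \<Rightarrow> ('a \<times> 'b) measure set" where
  "couplings \<alpha> \<beta> = {\<gamma>. sets \<gamma> = sets borel \<and> distr \<gamma> borel fst = \<alpha> \<and> distr \<gamma> borel snd = \<beta>}"

definition W1 :: "'a::euclidean_space measure \<Rightarrow> 'a measure \<Rightarrow> ennreal" where
  "W1 \<alpha> \<beta> = (INF \<gamma> \<in> couplings \<alpha> \<beta>. \<integral>\<^sup>+ p. ennreal (dist (fst p) (snd p)) \<partial>\<gamma>)"

text \<open>K is a disintegration (regular conditional kernel) of \<pi> w.r.t. the first coordinate:
  \<pi>(dx,dy) = \<mu>(dx) K x (dy).\<close>
definition is_disintegration :: "'a::euclidean_space measure \<Rightarrow> ('a \<times> 'b::euclidean_space) measure \<Rightarrow> ('a \<Rightarrow> 'b measure) \<Rightarrow> bool" where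
  "is_disintegration \<mu> \<pi> K \<longleftrightarrow>
     K \<in> \<mu> \<rightarrow>\<^sub>M prob_algebra borel \<and>
     \<pi> = \<mu> \<bind> (\<lambda>x. K x \<bind> (\<lambda>y. return borel (x, y)))"

definition mean_pair_dist :: "'a::euclidean_space measure \<Rightarrow> ennreal" where
  "mean_pair_dist \<nu> = (\<integral>\<^sup>+ y. \<integral>\<^sup>+ z. ennreal (dist y z) \<partial>\<nu> \<partial>\<nu>)"

text \<open>Wasserstein correlation coefficient of \<pi>, expressed via its disintegration K.\<close>
definition W_corr :: "'a::euclidean_space measure \<Rightarrow> 'a measure \<Rightarrow> ('a \<Rightarrow> 'a measure) \<Rightarrow> real" where
  "W_corr \<mu> \<nu> K = enn2real (\<integral>\<^sup>+ x. W1 (K x) \<nu> \<partial>\<mu>) / enn2real (mean_pair_dist \<nu>)"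

definition T_DGS :: "'a::euclidean_space measure \<Rightarrow> 'a measure \<Rightarrow> ('a \<Rightarrow> 'a measure) \<Rightarrow> real" where
  "T_DGS \<mu> \<nu> K = 1 - enn2real (\<integral>\<^sup>+ x. \<integral>\<^sup>+ y. \<integral>\<^sup>+ z. ennreal (dist y z) \<partial>K x \<partial>K x \<partial>\<mu>)
                       / enn2real (mean_pair_dist \<nu>)"

end

theory Submission
  imports Defs
begin

lemma fst_bm[measurable]: "fst \<in> (borel::('a::euclidean_space\<times>'b::euclidean_space) measure) \<rightarrow>\<^sub>M borel"
  by (metis borel_prod measurable_fst)
lemma snd_bm[measurable]: "snd \<in> (borel::('a::euclidean_space\<times>'b::euclidean_space) measure) \<rightarrow>\<^sub>M borel"
  by (metis borel_prod measurable_snd)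

lemma coupling_prob:
  fixes \<alpha> \<beta> :: "'a::euclidean_space measure"
  assumes "prob_space \<alpha>" "\<gamma> \<in> couplings \<alpha> \<beta>"
  shows "prob_space \<gamma>"
proof
  have s: "sets \<gamma> = sets borel" and d: "distr \<gamma> borel fst = \<alpha>" using assms(2) by (auto simp: couplings_def)
  have m: "fst \<in> \<gamma> \<rightarrow>\<^sub>M borel" using s by (simp add: measurable_cong_sets[OF s refl])
  have "emeasure \<gamma> (space \<gamma>) = emeasure (distr \<gamma> borel fst) (space borel)"
    using m by (subst emeasure_distr) (auto simp: sets_eq_imp_space_eq[OF s])
  also have "\<dots> = emeasure (distr \<gamma> borel fst) (space (distr \<gamma> borel fst))" by simp
  also have "\<dots> = 1" using d assms(1) prob_space.emeasure_space_1 by metis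
  finally show "emeasure \<gamma> (space \<gamma>) = 1" .
qed

lemma int_marg:
  assumes "sets \<gamma> = sets (borel::('a::euclidean_space\<times>'b::euclidean_space) measure)"
     "distr \<gamma> borel h = \<nu>" "h \<in> borel \<rightarrow>\<^sub>M borel" "f \<in> borel_measurable borel"
  shows "(\<integral>\<^sup>+y. f y \<partial>\<nu>) = (\<integral>\<^sup>+p. f (h p) \<partial>\<gamma>)"
proof -
  have "h \<in> \<gamma> \<rightarrow>\<^sub>M borel" using assms(1,3) by (simp add: measurable_cong_sets[OF assms(1) refl])
  then show ?thesis unfolding assms(2)[symmetric] using assms(4) by (simp add: nn_integral_distr)
qed

lemma tri: "ennreal (dist (snd p) (snd q)) \<le> ennreal (dist (snd p) (fst p)) + (ennreal (dist (fst p) (fst q)) + ennreal (dist (fst q) (snd (q::'a::metric_space \<times> 'a))))"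
proof -
  have "dist (snd p) (snd q) \<le> dist (snd p) (fst p) + (dist (fst p) (fst q) + dist (fst q) (snd q))"
    using dist_triangle[of "snd p" "snd q" "fst p"] dist_triangle[of "fst p" "snd q" "fst q"] by linarith
  then have "ennreal (dist (snd p) (snd q)) \<le> ennreal (dist (snd p) (fst p) + (dist (fst p) (fst q) + dist (fst q) (snd q)))"
    by (rule ennreal_leI)
  then show ?thesis
    by (simp add: ennreal_plus)
qed

lemma coupling_bound:
  fixes \<alpha> \<nu> :: "'a::euclidean_space measure"
  assumes a: "prob_space \<alpha>" "sets \<alpha> = sets borel" and n: "prob_space \<nu>" "sets \<nu> = sets borel"
    and g: "\<gamma> \<in> couplings \<alpha> \<nu>"
  shows "mean_pair_dist \<nu> \<le> (\<integral>\<^sup>+y. \<integral>\<^sup>+z. ennreal (dist y z) \<partial>\<alpha> \<partial>\<alpha>) + 2 * (\<integral>\<^sup>+p. ennreal (dist (fst p) (snd p)) \<partial>\<gamma>)"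
proof -
  have s: "sets \<gamma> = sets borel" and d1: "distr \<gamma> borel fst = \<alpha>" and d2: "distr \<gamma> borel snd = \<nu>"
    using g by (auto simp: couplings_def)
  interpret G: prob_space \<gamma> using coupling_prob[OF a(1) g] .
  have mg[measurable_cong]: "sets \<gamma> = sets (borel::('a\<times>'a) measure)" by (fact s)
  let ?c = "\<integral>\<^sup>+p. ennreal (dist (fst p) (snd p)) \<partial>\<gamma>"
  have "mean_pair_dist \<nu> = (\<integral>\<^sup>+y. \<integral>\<^sup>+q. ennreal (dist y (snd q)) \<partial>\<gamma> \<partial>\<nu>)"
    unfolding mean_pair_dist_def
    by (intro nn_integral_cong int_marg[OF s d2]) auto
  also have "\<dots> = (\<integral>\<^sup>+p. \<integral>\<^sup>+q. ennreal (dist (snd p) (snd q)) \<partial>\<gamma> \<partial>\<gamma>)"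
    by (rule int_marg[OF s d2]) measurable
  finally have D: "mean_pair_dist \<nu> = (\<integral>\<^sup>+p. \<integral>\<^sup>+q. ennreal (dist (snd p) (snd q)) \<partial>\<gamma> \<partial>\<gamma>)" .
  have "(\<integral>\<^sup>+y. \<integral>\<^sup>+z. ennreal (dist y z) \<partial>\<alpha> \<partial>\<alpha>) = (\<integral>\<^sup>+y. \<integral>\<^sup>+q. ennreal (dist y (fst q)) \<partial>\<gamma> \<partial>\<alpha>)"
    by (intro nn_integral_cong int_marg[OF s d1]) auto
  also have "\<dots> = (\<integral>\<^sup>+p. \<integral>\<^sup>+q. ennreal (dist (fst p) (fst q)) \<partial>\<gamma> \<partial>\<gamma>)"
    by (rule int_marg[OF s d1]) measurable
  finally have A: "(\<integral>\<^sup>+y. \<integral>\<^sup>+z. ennreal (dist y z) \<partial>\<alpha> \<partial>\<alpha>) = (\<integral>\<^sup>+p. \<integral>\<^sup>+q. ennreal (dist (fst p) (fst q)) \<partial>\<gamma> \<partial>\<gamma>)" .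
  have cm: "(\<lambda>x. ennreal (f x)) \<in> borel_measurable \<gamma>" if "continuous_on UNIV f" for f :: "'a\<times>'a \<Rightarrow> real"
  proof -
    have "f \<in> borel_measurable borel" using that by (rule borel_measurable_continuous_onI)
    then have "(\<lambda>x. ennreal (f x)) \<in> borel_measurable borel" by measurable
    then show ?thesis by (simp add: measurable_cong_sets[OF s refl])
  qed
  have sp: "sets (\<gamma> \<Otimes>\<^sub>M \<gamma>) = sets (borel :: (('a\<times>'a)\<times>('a\<times>'a)) measure)"
    using sets_pair_measure_cong[OF s s] borel_prod[where 'a="'a\<times>'a" and 'b="'a\<times>'a"] by metis
  have cm2: "(\<lambda>x. ennreal (f x)) \<in> borel_measurable (\<gamma> \<Otimes>\<^sub>M \<gamma>)" if "continuous_on UNIV f" for f :: "('a\<times>'a)\<times>('a\<times>'a) \<Rightarrow> real"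
  proof -
    have "f \<in> borel_measurable borel" using that by (rule borel_measurable_continuous_onI)
    then have "(\<lambda>x. ennreal (f x)) \<in> borel_measurable borel" by measurable
    then show ?thesis by (simp add: measurable_cong_sets[OF sp refl])
  qed
  have "(\<lambda>z. ennreal (dist (fst (fst z)) (fst (snd z)))) \<in> borel_measurable (\<gamma> \<Otimes>\<^sub>M \<gamma>)"
    by (rule cm2) (intro continuous_intros)
  then have "case_prod (\<lambda>p q. ennreal (dist (fst p) (fst q))) \<in> borel_measurable (\<gamma> \<Otimes>\<^sub>M \<gamma>)"
    by (simp add: case_prod_beta')
  then have inner: "(\<lambda>p. \<integral>\<^sup>+q. ennreal (dist (fst p) (fst q)) \<partial>\<gamma>) \<in> borel_measurable \<gamma>"
    by (rule G.borel_measurable_nn_integral)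
  have m1: "(\<lambda>q. ennreal (dist (snd p) (fst p))) \<in> borel_measurable \<gamma>" for p by simp
  have m2: "(\<lambda>q. ennreal (dist (fst p) (fst q))) \<in> borel_measurable \<gamma>" for p
    by (rule cm) (intro continuous_intros)
  have m3: "(\<lambda>q. ennreal (dist (fst q) (snd q))) \<in> borel_measurable \<gamma>"
    by (rule cm) (intro continuous_intros)
  have m4: "(\<lambda>q. ennreal (dist (snd q) (fst q))) \<in> borel_measurable \<gamma>"
    by (rule cm) (intro continuous_intros)
  have m5: "(\<lambda>q. ennreal (dist (fst p) (fst q)) + ennreal (dist (fst q) (snd q))) \<in> borel_measurable \<gamma>" for p
    using m2 m3 by (rule borel_measurable_add)
  have m6: "(\<lambda>p. (\<integral>\<^sup>+q. ennreal (dist (fst p) (fst q)) \<partial>\<gamma>) + ?c) \<in> borel_measurable \<gamma>"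
    using inner by simp
  have le1: "(\<integral>\<^sup>+p. \<integral>\<^sup>+q. ennreal (dist (snd p) (snd q)) \<partial>\<gamma> \<partial>\<gamma>) \<le>
     (\<integral>\<^sup>+p. \<integral>\<^sup>+q. ennreal (dist (snd p) (fst p)) + (ennreal (dist (fst p) (fst q)) + ennreal (dist (fst q) (snd q))) \<partial>\<gamma> \<partial>\<gamma>)"
    by (intro nn_integral_mono tri)
  also have "\<dots> = (\<integral>\<^sup>+p. ennreal (dist (snd p) (fst p)) + ((\<integral>\<^sup>+q. ennreal (dist (fst p) (fst q)) \<partial>\<gamma>) + ?c) \<partial>\<gamma>)"
    apply (intro nn_integral_cong)
    apply (subst nn_integral_add[OF m1 m5])
    apply (subst nn_integral_add[OF m2 m3])
    apply (simp add: G.emeasure_space_1)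
    done
  also have "\<dots> = ?c + ((\<integral>\<^sup>+p. \<integral>\<^sup>+q. ennreal (dist (fst p) (fst q)) \<partial>\<gamma> \<partial>\<gamma>) + ?c)"
    apply (subst nn_integral_add[OF m4 m6])
    apply (subst nn_integral_add[OF inner])
    apply simp
    apply (simp add: dist_commute G.emeasure_space_1)
    done
  finally show ?thesis using D A by (simp add: algebra_simps mult_2)
qed

lemma cont_meas:
  assumes "sets M = sets (borel::'c::topological_space measure)" "continuous_on UNIV (f::'c\<Rightarrow>real)"
  shows "(\<lambda>x. ennreal (f x)) \<in> borel_measurable M"
proof -
  have "f \<in> borel_measurable borel" using assms(2) by (rule borel_measurable_continuous_onI)
  then have "(\<lambda>x. ennreal (f x)) \<in> borel_measurable borel" by measurable
  then show ?thesis by (simp add: measurable_cong_sets[OF assms(1) refl])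
qed

lemma prod_coupling:
  fixes \<alpha> \<nu> :: "'a::euclidean_space measure"
  assumes a: "prob_space \<alpha>" "sets \<alpha> = sets borel" and n: "prob_space \<nu>" "sets \<nu> = sets borel"
  shows "\<alpha> \<Otimes>\<^sub>M \<nu> \<in> couplings \<alpha> \<nu>"
proof -
  interpret P: pair_prob_space \<alpha> \<nu> using a n by (simp add: pair_prob_space_def pair_sigma_finite_def prob_space_imp_sigma_finite)
  have s: "sets (\<alpha> \<Otimes>\<^sub>M \<nu>) = sets borel"
    using sets_pair_measure_cong[OF a(2) n(2)] borel_prod[where 'a='a and 'b='a] by metis
  have mf: "fst \<in> \<alpha> \<Otimes>\<^sub>M \<nu> \<rightarrow>\<^sub>M borel" using measurable_fst[of \<alpha> \<nu>] by (simp add: measurable_cong_sets[OF refl a(2)])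
  have ms: "snd \<in> \<alpha> \<Otimes>\<^sub>M \<nu> \<rightarrow>\<^sub>M borel" using measurable_snd[of \<alpha> \<nu>] by (simp add: measurable_cong_sets[OF refl n(2)])
  have d1: "distr (\<alpha> \<Otimes>\<^sub>M \<nu>) borel fst = \<alpha>"
  proof (rule measure_eqI)
    show "sets (distr (\<alpha> \<Otimes>\<^sub>M \<nu>) borel fst) = sets \<alpha>" using a(2) by simp
    fix A assume "A \<in> sets (distr (\<alpha> \<Otimes>\<^sub>M \<nu>) borel fst)"
    hence A: "A \<in> sets \<alpha>" using a(2) by simp
    have "fst -` A \<inter> space (\<alpha> \<Otimes>\<^sub>M \<nu>) = A \<times> space \<nu>" using sets.sets_into_space[OF A] by (auto simp: space_pair_measure)
    moreover have "emeasure (\<alpha> \<Otimes>\<^sub>M \<nu>) (A \<times> space \<nu>) = emeasure \<alpha> A"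
      using P.M2.emeasure_pair_measure_Times[OF A sets.top[of \<nu>]] P.M2.emeasure_space_1 by simp
    moreover have "A \<in> sets borel" using A a(2) by simp
    ultimately show "emeasure (distr (\<alpha> \<Otimes>\<^sub>M \<nu>) borel fst) A = emeasure \<alpha> A"
      by (simp add: emeasure_distr[OF mf])
  qed
  have d2: "distr (\<alpha> \<Otimes>\<^sub>M \<nu>) borel snd = \<nu>"
  proof (rule measure_eqI)
    show "sets (distr (\<alpha> \<Otimes>\<^sub>M \<nu>) borel snd) = sets \<nu>" using n(2) by simp
    fix A assume "A \<in> sets (distr (\<alpha> \<Otimes>\<^sub>M \<nu>) borel snd)"
    hence A: "A \<in> sets \<nu>" using n(2) by simp
    have "snd -` A \<inter> space (\<alpha> \<Otimes>\<^sub>M \<nu>) = space \<alpha> \<times> A" using sets.sets_into_space[OF A] by (auto simp: space_pair_measure)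
    moreover have "emeasure (\<alpha> \<Otimes>\<^sub>M \<nu>) (space \<alpha> \<times> A) = emeasure \<nu> A"
      using P.M2.emeasure_pair_measure_Times[OF sets.top[of \<alpha>] A] P.M1.emeasure_space_1 by simp
    moreover have "A \<in> sets borel" using A n(2) by simp
    ultimately show "emeasure (distr (\<alpha> \<Otimes>\<^sub>M \<nu>) borel snd) A = emeasure \<nu> A"
      by (simp add: emeasure_distr[OF ms])
  qed
  show ?thesis using s d1 d2 by (simp add: couplings_def)
qed

lemma coupling_dist_bound:
  fixes \<alpha> \<nu> :: "'a::euclidean_space measure"
  assumes g: "\<gamma> \<in> couplings \<alpha> \<nu>"
  shows "(\<integral>\<^sup>+p. ennreal (dist (fst p) (snd p)) \<partial>\<gamma>) \<le> (\<integral>\<^sup>+y. ennreal (norm y) \<partial>\<alpha>) + (\<integral>\<^sup>+y. ennreal (norm y) \<partial>\<nu>)"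
proof -
  have s: "sets \<gamma> = sets borel" and d1: "distr \<gamma> borel fst = \<alpha>" and d2: "distr \<gamma> borel snd = \<nu>"
    using g by (auto simp: couplings_def)
  have "(\<integral>\<^sup>+p. ennreal (dist (fst p) (snd p)) \<partial>\<gamma>) \<le> (\<integral>\<^sup>+p. ennreal (norm (fst p)) + ennreal (norm (snd p)) \<partial>\<gamma>)"
  proof (rule nn_integral_mono)
    fix p :: "'a \<times> 'a"
    have "dist (fst p) (snd p) \<le> norm (fst p) + norm (snd p)" by (simp add: dist_norm norm_triangle_ineq4)
    then have "ennreal (dist (fst p) (snd p)) \<le> ennreal (norm (fst p) + norm (snd p))" by (rule ennreal_leI)
    then show "ennreal (dist (fst p) (snd p)) \<le> ennreal (norm (fst p)) + ennreal (norm (snd p))" by (simp add: ennreal_plus)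
  qed
  also have "\<dots> = (\<integral>\<^sup>+p. ennreal (norm (fst p)) \<partial>\<gamma>) + (\<integral>\<^sup>+p. ennreal (norm (snd p)) \<partial>\<gamma>)"
    by (rule nn_integral_add; rule cont_meas[OF s]; intro continuous_intros)
  also have "\<dots> = (\<integral>\<^sup>+y. ennreal (norm y) \<partial>\<alpha>) + (\<integral>\<^sup>+y. ennreal (norm y) \<partial>\<nu>)"
    using int_marg[OF s d1, of "\<lambda>y. ennreal (norm y)"] int_marg[OF s d2, of "\<lambda>y. ennreal (norm y)"] by simp
  finally show ?thesis .
qed


lemma disint_integral:
  fixes \<mu> \<nu> :: "'a::euclidean_space measure" and K :: "'a \<Rightarrow> 'a measure"
  assumes sm: "sets \<mu> = sets borel" and c: "\<pi> \<in> couplings \<mu> \<nu>" and d: "is_disintegration \<mu> \<pi> K"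
    and f: "f \<in> borel_measurable borel"
  shows "(\<integral>\<^sup>+x. \<integral>\<^sup>+y. f y \<partial>K x \<partial>\<mu>) = (\<integral>\<^sup>+y. f y \<partial>\<nu>)"
proof -
  have s: "sets \<pi> = sets borel" and d2: "distr \<pi> borel snd = \<nu>" using c by (auto simp: couplings_def)
  have Km: "K \<in> \<mu> \<rightarrow>\<^sub>M prob_algebra borel" and pe: "\<pi> = \<mu> \<bind> (\<lambda>x. K x \<bind> (\<lambda>y. return borel (x, y)))"
    using d by (auto simp: is_disintegration_def)
  have Ks: "K \<in> \<mu> \<rightarrow>\<^sub>M subprob_algebra borel" using Km by (rule measurable_prob_algebraD)
  have sp: "sets (\<mu> \<Otimes>\<^sub>M borel) = sets (borel :: ('a\<times>'a) measure)"
    using sets_pair_measure_cong[OF sm refl, of "borel::'a measure"] borel_prod[where 'a='a and 'b='a] by metis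
  have idm: "(\<lambda>p. p) \<in> \<mu> \<Otimes>\<^sub>M borel \<rightarrow>\<^sub>M (borel :: ('a\<times>'a) measure)"
    by (simp add: measurable_cong_sets[OF sp refl])
  have "case_prod (\<lambda>x y. return (borel :: ('a\<times>'a) measure) (x, y)) \<in> \<mu> \<Otimes>\<^sub>M borel \<rightarrow>\<^sub>M subprob_algebra borel"
    using measurable_compose[OF idm return_measurable] by (simp add: case_prod_beta')
  then have Nm: "(\<lambda>x. K x \<bind> (\<lambda>y. return borel (x, y))) \<in> \<mu> \<rightarrow>\<^sub>M subprob_algebra borel"
    by (rule measurable_bind'[OF Ks])
  have fs: "(\<lambda>p. f (snd p)) \<in> borel_measurable (borel :: ('a\<times>'a) measure)" using f by measurable
  have "(\<integral>\<^sup>+y. f y \<partial>\<nu>) = (\<integral>\<^sup>+p. f (snd p) \<partial>\<pi>)" by (rule int_marg[OF s d2 snd_bm f])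
  also have "\<dots> = (\<integral>\<^sup>+x. \<integral>\<^sup>+p. f (snd p) \<partial>(K x \<bind> (\<lambda>y. return borel (x, y))) \<partial>\<mu>)"
    unfolding pe by (rule nn_integral_bind[OF fs Nm])
  also have "\<dots> = (\<integral>\<^sup>+x. \<integral>\<^sup>+y. f y \<partial>K x \<partial>\<mu>)"
  proof (rule nn_integral_cong)
    fix x assume x: "x \<in> space \<mu>"
    have Kx: "K x \<in> space (subprob_algebra borel)" using Ks x by (rule measurable_space)
    have sK: "sets (K x) = sets borel" using Kx by (simp add: space_subprob_algebra)
    have pm: "Pair x \<in> K x \<rightarrow>\<^sub>M (borel :: ('a\<times>'a) measure)"
    proof -
      have "Pair x \<in> (borel::'a measure) \<rightarrow>\<^sub>M borel \<Otimes>\<^sub>M borel" by measurable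
      then show ?thesis by (simp add: borel_prod measurable_cong_sets[OF sK refl])
    qed
    have rm: "(\<lambda>y. return borel (x, y)) \<in> K x \<rightarrow>\<^sub>M subprob_algebra (borel :: ('a\<times>'a) measure)"
      using measurable_compose[OF pm return_measurable] by simp
    have "(\<integral>\<^sup>+p. f (snd p) \<partial>(K x \<bind> (\<lambda>y. return borel (x, y)))) = (\<integral>\<^sup>+y. \<integral>\<^sup>+p. f (snd p) \<partial>return borel (x, y) \<partial>K x)"
      by (rule nn_integral_bind[OF fs rm])
    also have "\<dots> = (\<integral>\<^sup>+y. f y \<partial>K x)"
      by (intro nn_integral_cong) (simp add: nn_integral_return[OF _ fs])
    finally show "(\<integral>\<^sup>+p. f (snd p) \<partial>(K x \<bind> (\<lambda>y. return borel (x, y)))) = (\<integral>\<^sup>+y. f y \<partial>K x)" .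
  qed
  finally show ?thesis ..
qed


lemma pair_bound:
  fixes \<alpha> :: "'a::euclidean_space measure"
  assumes a: "prob_space \<alpha>" "sets \<alpha> = sets borel"
  shows "(\<integral>\<^sup>+y. \<integral>\<^sup>+z. ennreal (dist y z) \<partial>\<alpha> \<partial>\<alpha>) \<le> 2 * (\<integral>\<^sup>+y. ennreal (norm y) \<partial>\<alpha>)"
proof -
  interpret A: prob_space \<alpha> by (fact a(1))
  have nm: "(\<lambda>y. ennreal (norm y)) \<in> borel_measurable \<alpha>" by (rule cont_meas[OF a(2)]) (intro continuous_intros)
  have "(\<integral>\<^sup>+y. \<integral>\<^sup>+z. ennreal (dist y z) \<partial>\<alpha> \<partial>\<alpha>) \<le> (\<integral>\<^sup>+y. \<integral>\<^sup>+z. ennreal (norm y) + ennreal (norm z) \<partial>\<alpha> \<partial>\<alpha>)"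
  proof (intro nn_integral_mono)
    fix y z :: 'a
    have "dist y z \<le> norm y + norm z" by (simp add: dist_norm norm_triangle_ineq4)
    then have "ennreal (dist y z) \<le> ennreal (norm y + norm z)" by (rule ennreal_leI)
    then show "ennreal (dist y z) \<le> ennreal (norm y) + ennreal (norm z)" by (simp add: ennreal_plus)
  qed
  also have "\<dots> = (\<integral>\<^sup>+y. ennreal (norm y) + (\<integral>\<^sup>+z. ennreal (norm z) \<partial>\<alpha>) \<partial>\<alpha>)"
    by (intro nn_integral_cong) (simp add: nn_integral_add[OF _ nm] A.emeasure_space_1)
  also have "\<dots> = 2 * (\<integral>\<^sup>+y. ennreal (norm y) \<partial>\<alpha>)"
    by (simp add: nn_integral_add[OF nm] A.emeasure_space_1 mult_2)
  finally show ?thesis .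
qed

lemma pos_mpd:
  fixes \<nu> :: "'a::euclidean_space measure"
  assumes n: "prob_space \<nu>" "sets \<nu> = sets borel" and nd: "\<forall>x. \<nu> \<noteq> return borel x"
  shows "0 < mean_pair_dist \<nu>"
proof (rule ccontr)
  interpret N: prob_space \<nu> by (fact n(1))
  assume "\<not> 0 < mean_pair_dist \<nu>"
  then have z: "mean_pair_dist \<nu> = 0" by (simp add: zero_less_iff_neq_zero)
  have spp: "sets (\<nu> \<Otimes>\<^sub>M \<nu>) = sets (borel :: ('a\<times>'a) measure)"
    using sets_pair_measure_cong[OF n(2) n(2)] borel_prod[where 'a='a and 'b='a] by metis
  have "(\<lambda>p. ennreal (dist (fst p) (snd p))) \<in> borel_measurable (\<nu> \<Otimes>\<^sub>M \<nu>)"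
    by (rule cont_meas[OF spp]) (intro continuous_intros)
  then have "case_prod (\<lambda>y z. ennreal (dist y z)) \<in> borel_measurable (\<nu> \<Otimes>\<^sub>M \<nu>)" by (simp add: case_prod_beta')
  then have im: "(\<lambda>y. \<integral>\<^sup>+z. ennreal (dist y z) \<partial>\<nu>) \<in> borel_measurable \<nu>"
    by (rule N.borel_measurable_nn_integral)
  have ae0: "AE y in \<nu>. (\<integral>\<^sup>+z. ennreal (dist y z) \<partial>\<nu>) = 0"
    using z nn_integral_0_iff_AE[OF im] unfolding mean_pair_dist_def by simp
  have "\<exists>y. (\<integral>\<^sup>+z. ennreal (dist y z) \<partial>\<nu>) = 0"
  proof (rule ccontr)
    assume h: "\<not> (\<exists>y. (\<integral>\<^sup>+z. ennreal (dist y z) \<partial>\<nu>) = 0)"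
    from ae0 have "AE y in \<nu>. False" by (rule eventually_mono) (use h in blast)
    then show False by simp
  qed
  then obtain y where y: "(\<integral>\<^sup>+z. ennreal (dist y z) \<partial>\<nu>) = 0" by blast
  have dm: "(\<lambda>z. ennreal (dist y z)) \<in> borel_measurable \<nu>" by (rule cont_meas[OF n(2)]) (intro continuous_intros)
  have "AE z in \<nu>. y = z" using y dm by (simp add: nn_integral_0_iff_AE)
  then have ae: "AE z in \<nu>. z = y" by eventually_elim auto
  have "\<nu> = return borel y"
  proof (rule measure_eqI)
    show "sets \<nu> = sets (return borel y)" using n(2) by simp
    fix A assume A: "A \<in> sets \<nu>"
    have Ab: "A \<in> sets borel" using A n(2) by simp
    show "emeasure \<nu> A = emeasure (return borel y) A"
    proof (cases "y \<in> A")
      case True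
      from ae have "AE z in \<nu>. z \<in> A" by (rule eventually_mono) (simp add: True)
      then have "N.prob A = 1" using N.AE_in_set_eq_1[OF A] by simp
      then show ?thesis using True Ab by (simp add: N.emeasure_eq_measure)
    next
      case False
      from ae have "AE z in \<nu>. z \<notin> A" by (rule eventually_mono) (simp add: False)
      moreover have "{x \<in> space \<nu>. \<not> x \<notin> A} = A" using sets.sets_into_space[OF A] by auto
      ultimately have "emeasure \<nu> A = 0" using AE_iff_measurable[OF A, of "\<lambda>x. x \<notin> A"] by blast
      then show ?thesis using False Ab by simp
    qed
  qed
  then show False using nd by blast
qed

lemma half: "2 * ((x::ennreal) / 2) = x"
proof -
  have "2 * (x / 2) = x * 2 / 2" by (simp add: ennreal_times_divide mult.commute)
  also have "\<dots> = x" by (rule ennreal_mult_divide_eq) simp_all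
  finally show ?thesis .
qed
lemma l1: "d \<le> 2 * (((d::ennreal) - a) / 2) + a"
  unfolding half diff_add_self_ennreal by (simp add: linorder_not_le order_less_imp_le)
lemma l2: "(d::ennreal) < top \<Longrightarrow> d \<le> a + 2 * c \<Longrightarrow> (d - a) / 2 \<le> c"
proof -
  assume "d < top" "d \<le> a + 2 * c"
  then have "d - a \<le> c * 2" by (auto simp add: ennreal_minus_le_iff mult.commute)
  then have "(d - a) / 2 \<le> (c * 2) / 2" by (rule divide_right_mono_ennreal)
  also have "\<dots> = c" by (rule ennreal_mult_divide_eq) simp_all
  finally show ?thesis .
qed
lemma l3:
  assumes "(d::ennreal) < top" "0 < d" "a < top" "w < top" "d \<le> a + 2*w"
  shows "1 - enn2real a / enn2real d \<le> 2 * (enn2real w / enn2real d)"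
proof -
  have "enn2real d \<le> enn2real (a + 2*w)" using assms by (intro enn2real_mono) (auto simp: ennreal_mult_less_top)
  also have "\<dots> = enn2real a + 2 * enn2real w" using assms by (simp add: enn2real_plus enn2real_mult ennreal_mult_less_top)
  finally have le: "enn2real d \<le> enn2real a + 2 * enn2real w" .
  have pos: "0 < enn2real d" using assms by (simp add: enn2real_positive_iff)
  have "1 - enn2real a / enn2real d = (enn2real d - enn2real a) / enn2real d" using pos by (simp add: field_simps)
  also have "\<dots> \<le> (2 * enn2real w) / enn2real d" using le pos by (intro divide_right_mono) auto
  finally show ?thesis by simp
qed

theorem mainTheorem5:
  fixes \<mu> \<nu> :: "'a::euclidean_space measure"
    and \<pi> :: "('a \<times> 'a) measure"
    and K :: "'a \<Rightarrow> 'a measure"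
  assumes "prob_space \<mu>" and "sets \<mu> = sets borel"
    and "prob_space \<nu>" and "sets \<nu> = sets borel"
    and "integrable \<nu> norm"
    and "\<forall>x. \<nu> \<noteq> return borel x"
    and "\<pi> \<in> couplings \<mu> \<nu>"
    and "is_disintegration \<mu> \<pi> K"
  shows "T_DGS \<mu> \<nu> K \<le> 2 * W_corr \<mu> \<nu> K"
proof -
  note mu = assms(1,2) and nu = assms(3,4)
  interpret M: prob_space \<mu> by (fact assms(1))
  define E where "E = (\<integral>\<^sup>+y. ennreal (norm y) \<partial>\<nu>)"
  define D where "D = mean_pair_dist \<nu>"
  define m where "m x = (\<integral>\<^sup>+y. ennreal (norm y) \<partial>K x)" for x
  define A where "A x = (\<integral>\<^sup>+y. \<integral>\<^sup>+z. ennreal (dist y z) \<partial>K x \<partial>K x)" for x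
  define W where "W x = W1 (K x) \<nu>" for x
  have Et: "E < top" using integrableD(2)[OF assms(5)] by (simp add: E_def top.not_eq_extremum)
  have Km: "K \<in> \<mu> \<rightarrow>\<^sub>M prob_algebra borel" using assms(8) by (simp add: is_disintegration_def)
  have Ks: "K \<in> \<mu> \<rightarrow>\<^sub>M subprob_algebra borel" using Km by (rule measurable_prob_algebraD)
  have Kx: "prob_space (K x) \<and> sets (K x) = sets borel" if "x \<in> space \<mu>" for x
    using measurable_space[OF Km that] by (simp add: space_prob_algebra)
  have nb: "(\<lambda>y. ennreal (norm y)) \<in> borel_measurable (borel::'a measure)" by measurable
  have mm: "m \<in> borel_measurable \<mu>"
    unfolding m_def by (rule measurable_compose[OF Ks nn_integral_measurable_subprob_algebra[OF nb]])
  have intm: "(\<integral>\<^sup>+x. m x \<partial>\<mu>) = E"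
    unfolding m_def E_def by (rule disint_integral[OF assms(2,7,8) nb])
  have DE: "D \<le> 2 * E" unfolding D_def E_def mean_pair_dist_def by (rule pair_bound[OF nu])
  have E2t: "2 * E < top" using Et by (simp add: ennreal_mult_less_top)
  have Dt: "D < top" using DE E2t by (rule le_less_trans)
  have Dp: "0 < D" unfolding D_def by (rule pos_mpd[OF nu assms(6)])
  have Am: "A \<in> borel_measurable \<mu>"
  proof -
    have Ksf: "(\<lambda>p. K (fst p)) \<in> \<mu> \<Otimes>\<^sub>M borel \<rightarrow>\<^sub>M subprob_algebra borel"
      by (rule measurable_compose[OF measurable_fst Ks])
    have "(\<lambda>(p, z). ennreal (dist (snd p) z)) \<in> borel_measurable ((\<mu> \<Otimes>\<^sub>M borel) \<Otimes>\<^sub>M (borel::'a measure))"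
      by measurable
    then have "(\<lambda>p. \<integral>\<^sup>+z. ennreal (dist (snd p) z) \<partial>K (fst p)) \<in> borel_measurable (\<mu> \<Otimes>\<^sub>M borel)"
      using nn_integral_measurable_subprob_algebra2[OF _ Ksf, of "\<lambda>p z. ennreal (dist (snd p) z)"] by simp
    then have "(\<lambda>(x, y). \<integral>\<^sup>+z. ennreal (dist y z) \<partial>K x) \<in> borel_measurable (\<mu> \<Otimes>\<^sub>M borel)"
      by (simp add: case_prod_beta')
    then show ?thesis unfolding A_def
      by (rule nn_integral_measurable_subprob_algebra2[OF _ Ks])
  qed
  have AB: "A x \<le> 2 * m x" if "x \<in> space \<mu>" for x
    unfolding A_def m_def using Kx[OF that] by (intro pair_bound) auto
  have WB: "W x \<le> m x + E" if "x \<in> space \<mu>" for x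
  proof -
    have "W x \<le> (\<integral>\<^sup>+p. ennreal (dist (fst p) (snd p)) \<partial>(K x \<Otimes>\<^sub>M \<nu>))"
      unfolding W_def W1_def using Kx[OF that] nu by (intro INF_lower prod_coupling) auto
    also have "\<dots> \<le> m x + E" unfolding m_def E_def by (rule coupling_dist_bound) (use Kx[OF that] nu prod_coupling in auto)
    finally show ?thesis .
  qed
  have WA: "(D - A x) / 2 \<le> W x" if "x \<in> space \<mu>" for x
    unfolding W_def W1_def
  proof (rule INF_greatest)
    fix \<gamma> assume g: "\<gamma> \<in> couplings (K x) \<nu>"
    have "D \<le> A x + 2 * (\<integral>\<^sup>+p. ennreal (dist (fst p) (snd p)) \<partial>\<gamma>)"
      unfolding D_def A_def using Kx[OF that] nu g by (intro coupling_bound) auto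
    then show "(D - A x) / 2 \<le> (\<integral>\<^sup>+p. ennreal (dist (fst p) (snd p)) \<partial>\<gamma>)" using Dt by (rule l2[rotated])
  qed
  have intA: "(\<integral>\<^sup>+x. A x \<partial>\<mu>) \<le> 2 * E"
  proof -
    have "(\<integral>\<^sup>+x. A x \<partial>\<mu>) \<le> (\<integral>\<^sup>+x. 2 * m x \<partial>\<mu>)" using AB by (rule nn_integral_mono)
    also have "\<dots> = 2 * E" using intm by (simp add: nn_integral_cmult[OF mm])
    finally show ?thesis .
  qed
  have intW: "(\<integral>\<^sup>+x. W x \<partial>\<mu>) \<le> E + E"
  proof -
    have "(\<integral>\<^sup>+x. W x \<partial>\<mu>) \<le> (\<integral>\<^sup>+x. m x + E \<partial>\<mu>)" using WB by (rule nn_integral_mono)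
    also have "\<dots> = E + E" using intm by (simp add: nn_integral_add[OF mm] M.emeasure_space_1)
    finally show ?thesis .
  qed
  have hm: "(\<lambda>x. (D - A x) / 2) \<in> borel_measurable \<mu>" using Am by measurable
  have main: "D \<le> (\<integral>\<^sup>+x. A x \<partial>\<mu>) + 2 * (\<integral>\<^sup>+x. W x \<partial>\<mu>)"
  proof -
    have "D = (\<integral>\<^sup>+x. D \<partial>\<mu>)" by (simp add: M.emeasure_space_1)
    also have "\<dots> \<le> (\<integral>\<^sup>+x. 2 * ((D - A x) / 2) + A x \<partial>\<mu>)" by (intro nn_integral_mono l1)
    also have "\<dots> = 2 * (\<integral>\<^sup>+x. (D - A x) / 2 \<partial>\<mu>) + (\<integral>\<^sup>+x. A x \<partial>\<mu>)"
      using hm Am by (simp add: nn_integral_add nn_integral_cmult)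
    also have "\<dots> \<le> 2 * (\<integral>\<^sup>+x. W x \<partial>\<mu>) + (\<integral>\<^sup>+x. A x \<partial>\<mu>)"
      using WA by (intro add_mono mult_left_mono nn_integral_mono) auto
    finally show ?thesis by (simp add: add.commute)
  qed
  have At: "(\<integral>\<^sup>+x. A x \<partial>\<mu>) < top" using intA E2t by (rule le_less_trans)
  have EEt: "E + E < top" using Et by simp
  have Wt: "(\<integral>\<^sup>+x. W x \<partial>\<mu>) < top" using intW EEt by (rule le_less_trans)
  have "1 - enn2real (\<integral>\<^sup>+x. A x \<partial>\<mu>) / enn2real D \<le> 2 * (enn2real (\<integral>\<^sup>+x. W x \<partial>\<mu>) / enn2real D)"
    by (rule l3[OF Dt Dp At Wt main])
  then show ?thesis unfolding T_DGS_def W_corr_def A_def W_def D_def .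
qed

end
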